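(* With the notation below, let $D\in\mathrm{Div}(C_p)$. (i) If $\deg(D)<0$ then $H^0(D)=\{-\infty\}$. (ii) If $\deg(D)>0$ then $H^0(D)$ contains a real-valued function, i.e. $H^0(D)\neq\{-\infty\}$.
   Context: Let $p$ be a prime, $H_p=\mathbb{Z}[1/p]$. $C_p$ is the set of subgroups $H=\lambda H_p\subset\mathbb{R}$, $\lambda>0$. $\mathcal K(C_p)$: continuous piecewise affine $f:(0,\infty)\to\mathbb{R}$ with slopes in $H_p$ and $f(p\lambda)=f(\lambda)$, plus the constant $-\infty$. For real-valued $f$ and $H=\lambda H_p$, $\mathrm{Ord}_H(f)=h_+-h_-$, $h_\pm=\lim_{\epsilon\to0\pm}(f((1+\epsilon)\lambda)-f(\lambda))/\epsilon\in H$, and the principal divisor is $(f)(H)=\mathrm{Ord}_H(f)$. A divisor $D$ assigns $D(H)\in H$ to each $H\in C_p$, zero for all but finitely many $H$; $\mathrm{Div}(C_p)$ is the group of divisors, ordered pointwise; $\deg(D)=\sum_HD(H)$. $H^0(D)=\{f\in\mathcal K(C_p)\text{ real-valued}\mid D+(f)\geq0\}\cup\{-\infty\}$. *)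

theory Defs
  imports "HOL-Analysis.Analysis"
begin

definition Hp :: "nat \<Rightarrow> real set" where
  "Hp p = {of_int a / (of_nat p) ^ n | a n. True}"

definition Cp :: "nat \<Rightarrow> real set set" where
  "Cp p = {(\<lambda>x. l * x) ` Hp p | l. l > 0}"

definition pw_affine_Hp :: "nat \<Rightarrow> (real \<Rightarrow> real) \<Rightarrow> bool" where
  "pw_affine_Hp p f \<longleftrightarrow>
     continuous_on {0<..} f \<and>
     (\<forall>a b. 0 < a \<and> a < b \<longrightarrow>
        (\<exists>S. finite S \<and> a \<in> S \<and> b \<in> S \<and> S \<subseteq> {a..b} \<and>
          (\<forall>x\<in>S. \<forall>y\<in>S. x < y \<and> {x<..<y} \<inter> S = {} \<longrightarrow>
             (\<exists>s c. s \<in> Hp p \<and> (\<forall>t\<in>{x..y}. f t = s * t + c)))))"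

definition Kreal :: "nat \<Rightarrow> (real \<Rightarrow> real) set" where
  "Kreal p = {f. pw_affine_Hp p f \<and> (\<forall>l>0. f (real p * l) = f l)}"

definition K :: "nat \<Rightarrow> (real \<Rightarrow> ereal) set" where
  "K p = {(\<lambda>x. ereal (f x)) | f. f \<in> Kreal p} \<union> {\<lambda>_. -\<infinity>}"

text \<open>Ord_H(f) computed at the representative lambda of H = lambda H_p.\<close>
definition Ord_at :: "(real \<Rightarrow> real) \<Rightarrow> real \<Rightarrow> real" where
  "Ord_at f l =
     Lim (at_right 0) (\<lambda>e. (f ((1 + e) * l) - f l) / e)
   - Lim (at_left 0) (\<lambda>e. (f ((1 + e) * l) - f l) / e)"

definition rep :: "nat \<Rightarrow> real set \<Rightarrow> real" where
  "rep p H = (SOME l. l > 0 \<and> H = (\<lambda>x. l * x) ` Hp p)"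

definition pdiv :: "nat \<Rightarrow> (real \<Rightarrow> real) \<Rightarrow> real set \<Rightarrow> real" where
  "pdiv p f H = (if H \<in> Cp p then Ord_at f (rep p H) else 0)"

definition is_divisor :: "nat \<Rightarrow> (real set \<Rightarrow> real) \<Rightarrow> bool" where
  "is_divisor p D \<longleftrightarrow>
     (\<forall>H\<in>Cp p. D H \<in> H) \<and> (\<forall>H. H \<notin> Cp p \<longrightarrow> D H = 0) \<and> finite {H. D H \<noteq> 0}"

definition deg :: "(real set \<Rightarrow> real) \<Rightarrow> real" where
  "deg D = (\<Sum>H\<in>{H. D H \<noteq> 0}. D H)"

definition H0 :: "nat \<Rightarrow> (real set \<Rightarrow> real) \<Rightarrow> (real \<Rightarrow> ereal) set" where
  "H0 p D = {(\<lambda>x. ereal (f x)) | f. f \<in> Kreal p \<and> (\<forall>H\<in>Cp p. D H + pdiv p f H \<ge> 0)}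
            \<union> {\<lambda>_. -\<infinity>}"

end

theory Submission
  imports Defs
begin


lemma Hp_iff: "h \<in> Hp p \<longleftrightarrow> (\<exists>a n. h = of_int a / of_nat p ^ n)"
  unfolding Hp_def by auto

lemma Hp_0[simp]: "0 \<in> Hp p"
  unfolding Hp_iff by (rule exI[of _ 0], rule exI[of _ 0]) simp

lemma Hp_1[simp]: "1 \<in> Hp p"
  unfolding Hp_iff by (rule exI[of _ 1], rule exI[of _ 0]) simp

lemma Hp_int: "of_int a \<in> Hp p"
  unfolding Hp_iff by (rule exI[of _ a], rule exI[of _ 0]) simp

lemma Hp_add:
  assumes "p > 0" "x \<in> Hp p" "y \<in> Hp p" shows "x + y \<in> Hp p"
proof -
  obtain a n where x: "x = of_int a / of_nat p ^ n" using assms Hp_iff by blast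
  obtain b m where y: "y = of_int b / of_nat p ^ m" using assms Hp_iff by blast
  have "x + y = of_int (a * int p ^ m + b * int p ^ n) / of_nat p ^ (n + m)"
    using assms(1) by (simp add: x y field_simps power_add)
  then show ?thesis unfolding Hp_iff by blast
qed

lemma Hp_uminus:
  assumes "x \<in> Hp p" shows "- x \<in> Hp p"
proof -
  obtain a n where x: "x = of_int a / of_nat p ^ n" using assms Hp_iff by blast
  have "-x = of_int (-a) / of_nat p ^ n" by (simp add: x)
  then show ?thesis unfolding Hp_iff by blast
qed

lemma Hp_diff:
  assumes "p > 0" "x \<in> Hp p" "y \<in> Hp p" shows "x - y \<in> Hp p"
  using Hp_add[OF assms(1,2) Hp_uminus[OF assms(3)]] by simp

lemma Hp_mult:
  assumes "x \<in> Hp p" "y \<in> Hp p" shows "x * y \<in> Hp p"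
proof -
  obtain a n where x: "x = of_int a / of_nat p ^ n" using assms Hp_iff by blast
  obtain b m where y: "y = of_int b / of_nat p ^ m" using assms Hp_iff by blast
  have "x * y = of_int (a * b) / of_nat p ^ (n + m)"
    by (simp add: x y power_add)
  then show ?thesis unfolding Hp_iff by blast
qed

lemma Hp_sum:
  assumes "p > 0" "\<And>j. j \<in> J \<Longrightarrow> c j \<in> Hp p" shows "(\<Sum>j\<in>J. c j) \<in> Hp p"
  using assms(2)
proof (induction J rule: infinite_finite_induct)
  case (insert x F) then show ?case by (simp add: Hp_add[OF assms(1)])
qed auto

lemma Hp_pow: "real p ^ k \<in> Hp p"
  unfolding Hp_iff by (rule exI[of _ "int p ^ k"], rule exI[of _ 0]) simp

lemma Hp_inv_pow: "1 / real p ^ k \<in> Hp p"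
  unfolding Hp_iff by (rule exI[of _ 1], rule exI[of _ k]) simp

lemma powr_int_cases:
  assumes "p > (0::real)"
  shows "p powr (of_int k) = (if k \<ge> 0 then p ^ nat k else 1 / p ^ nat (- k))"
  using assms by (auto simp: powr_realpow[symmetric] powr_minus_divide[symmetric] simp del: powr_minus_divide)

lemma Hp_powr:
  assumes "p > 0" shows "real p powr (of_int k) \<in> Hp p"
  using assms by (simp add: powr_int_cases Hp_pow Hp_inv_pow)

lemma Hp_dense:
  assumes "p > 1" "\<alpha> < \<beta>" shows "\<exists>h\<in>Hp p. \<alpha> < h \<and> h < \<beta>"
proof -
  obtain n where n: "1 / (\<beta> - \<alpha>) < real p ^ n"
    using real_arch_pow[of "real p" "1 / (\<beta> - \<alpha>)"] assms by auto
  have pn: "real p ^ n > 0" using assms by simp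
  have big: "(\<beta> - \<alpha>) * real p ^ n > 1"
    using n assms by (simp add: field_simps)
  define a where "a = \<lfloor>\<alpha> * real p ^ n\<rfloor> + 1"
  have a1: "\<alpha> * real p ^ n < of_int a" unfolding a_def by linarith
  have a2: "of_int a < \<beta> * real p ^ n" unfolding a_def using big
    by (simp add: algebra_simps) linarith
  have "\<alpha> < of_int a / real p ^ n" using a1 pn by (simp add: field_simps)
  moreover have "of_int a / real p ^ n < \<beta>" using a2 pn by (simp add: field_simps)
  moreover have "of_int a / real p ^ n \<in> Hp p" unfolding Hp_iff by blast
  ultimately show ?thesis by blast
qed



definition phi :: "nat \<Rightarrow> real \<Rightarrow> real set" where
  "phi p x = (\<lambda>t. x * t) ` Hp p"

lemma Hp_scale_sub:
  assumes "p > 0" "h \<in> Hp p" shows "real p powr of_int k * h \<in> Hp p"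
  using Hp_mult[OF Hp_powr[OF assms(1)] assms(2)] .

lemma Hp_scale_eq:
  assumes "p > 0" shows "(\<lambda>t. real p powr of_int k * t) ` Hp p = Hp p"
proof
  show "(\<lambda>t. real p powr of_int k * t) ` Hp p \<subseteq> Hp p"
    using Hp_scale_sub[OF assms] by blast
  show "Hp p \<subseteq> (\<lambda>t. real p powr of_int k * t) ` Hp p"
  proof
    fix h assume h: "h \<in> Hp p"
    have "real p powr of_int (-k) * h \<in> Hp p" using Hp_scale_sub[OF assms h] .
    moreover have "h = real p powr of_int k * (real p powr of_int (-k) * h)"
      using assms by (simp add: powr_minus field_simps)
    ultimately show "h \<in> (\<lambda>t. real p powr of_int k * t) ` Hp p" by blast
  qed
qed

lemma phi_scale:
  assumes "p > 0" shows "phi p (real p powr of_int k * x) = phi p x"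
proof -
  have "phi p (real p powr of_int k * x) = (\<lambda>t. x * t) ` ((\<lambda>t. real p powr of_int k * t) ` Hp p)"
    unfolding phi_def image_image by (simp add: mult.assoc mult.commute mult.left_commute)
  then show ?thesis using Hp_scale_eq[OF assms] by (simp add: phi_def)
qed

lemma self_in_phi: "x \<in> phi p x"
  unfolding phi_def using Hp_1 by force

lemma phi_eq_unit:
  assumes "prime p" "x > 0" "y > 0" "phi p x = phi p y"
  shows "\<exists>k::int. y = real p powr of_int k * x"
proof -
  have p0: "p > 0" using assms(1) prime_gt_0_nat by blast
  have "y \<in> phi p x" using assms(4) self_in_phi by metis
  then obtain h where h: "h \<in> Hp p" "y = x * h" unfolding phi_def by blast
  have "x \<in> phi p y" using assms(4) self_in_phi by metis
  then obtain h' where h': "h' \<in> Hp p" "x = y * h'" unfolding phi_def by blast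
  obtain a n where a: "h = of_int a / real p ^ n" using h(1) Hp_iff by blast
  obtain b m where b: "h' = of_int b / real p ^ m" using h'(1) Hp_iff by blast
  have "x * 1 = x * (h * h')"
  proof -
    have "x = y * h'" by (rule h'(2))
    also have "\<dots> = x * (h * h')" by (simp add: h(2) mult.assoc)
    finally show ?thesis by simp
  qed
  then have hh: "h * h' = 1" using assms(2) by (metis mult_cancel_left less_irrefl)
  have hpos: "h > 0" using h(2) assms(2,3) by (simp add: zero_less_mult_iff)
  then have apos: "a > 0" using a p0 by (simp add: zero_less_divide_iff)
  have "real_of_int (a * b) = real p ^ (n + m)"
    using hh p0 unfolding a b by (simp add: field_simps power_add)
  then have "real_of_int (a * b) = real_of_int (int p ^ (n + m))" by simp
  then have ab: "a * b = int p ^ (n + m)" by (simp only: of_int_eq_iff)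
  have "a * b > 0" using ab p0 by simp
  then have bpos: "b > 0" using apos by (simp add: zero_less_mult_iff)
  have "nat a * nat b = nat (a * b)" using apos by (simp add: nat_mult_distrib)
  also have "\<dots> = p ^ (n + m)" using ab by (simp add: nat_power_eq)
  finally have "nat a * nat b = p ^ (n + m)" .
  then have "nat a dvd p ^ (n + m)" using dvd_triv_left[of "nat a" "nat b"] by simp
  then obtain i where i: "nat a = p ^ i"
    using assms(1) by (auto simp: divides_primepow_nat)
  then have "a = int (p ^ i)" using apos by (metis int_nat_eq less_imp_le)
  then have "real_of_int a = real p ^ i" by simp
  then have "h = real p powr of_int (int i - int n)" unfolding a using p0
    by (simp add: powr_diff powr_realpow)
  then have "y = real p powr of_int (int i - int n) * x" using h(2) by (simp add: mult.commute)
  then show ?thesis by blast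
qed

lemma Cp_iff: "H \<in> Cp p \<longleftrightarrow> (\<exists>l>0. H = phi p l)"
  unfolding Cp_def phi_def by auto

lemma rep_props:
  assumes "H \<in> Cp p" shows "rep p H > 0" "H = phi p (rep p H)"
proof -
  have "\<exists>l. l > 0 \<and> H = (\<lambda>x. l * x) ` Hp p" using assms unfolding Cp_def by auto
  then have "rep p H > 0 \<and> H = (\<lambda>x. rep p H * x) ` Hp p"
    unfolding rep_def by (rule someI_ex)
  then show "rep p H > 0" "H = phi p (rep p H)" unfolding phi_def by auto
qed

lemma normalize_rep:
  assumes "p > 1" "l > 0"
  shows "\<exists>k::int. 1 < real p powr of_int k * l \<and> real p powr of_int k * l \<le> real p"
proof -
  define k where "k = \<lfloor>1 - log (real p) l\<rfloor>"
  have p1: "real p > 1" using assms by simp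
  have e: "real p powr of_int k * l = real p powr (of_int k + log (real p) l)"
    using assms p1 by (simp add: powr_add)
  have k1: "of_int k + log (real p) l > 0" unfolding k_def by linarith
  have k2: "of_int k + log (real p) l \<le> 1" unfolding k_def by linarith
  have "1 < real p powr (of_int k + log (real p) l)"
    using powr_less_mono[OF k1 p1] p1 by simp
  moreover have "real p powr (of_int k + log (real p) l) \<le> real p powr 1"
    using k2 p1 by (intro powr_mono) auto
  ultimately show ?thesis using e p1 by (intro exI[of _ k]) simp
qed

lemma Cp_rep_in:
  assumes "p > 1" "H \<in> Cp p" shows "\<exists>x. 1 < x \<and> x \<le> real p \<and> H = phi p x"
proof -
  obtain l where l: "l > 0" "H = phi p l" using assms Cp_iff by blast
  obtain k where "1 < real p powr of_int k * l" "real p powr of_int k * l \<le> real p"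
    using normalize_rep[OF assms(1) l(1)] by blast
  moreover have "phi p (real p powr of_int k * l) = phi p l" using phi_scale assms(1) by simp
  ultimately show ?thesis using l by auto
qed

lemma phi_inj:
  assumes "prime p" "1 < x" "x \<le> real p" "1 < y" "y \<le> real p" "phi p x = phi p y"
  shows "x = y"
proof -
  have p1: "real p > 1" using assms(1) prime_gt_1_nat by simp
  obtain k :: int where k: "y = real p powr of_int k * x"
    using phi_eq_unit[OF assms(1) _ _ assms(6)] assms by auto
  have "k = 0"
  proof (rule ccontr)
    assume "k \<noteq> 0"
    then consider "k \<ge> 1" | "k \<le> -1" by linarith
    then show False
    proof cases
      case 1
      then have "real p powr of_int k \<ge> real p powr 1" using p1 by (intro powr_mono) auto
      then have "y \<ge> real p * x" using k assms by (simp add: mult_right_mono)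
      moreover have "real p * x > real p * 1" using p1 assms(2) by (intro mult_strict_left_mono) auto
      ultimately show False using assms(5) by linarith
    next
      case 2
      then have "real p powr of_int k \<le> real p powr (-1)" using p1 by (intro powr_mono) auto
      then have "y \<le> x / real p" using k assms p1 by (simp add: powr_minus divide_inverse mult.commute mult_left_mono)
      then have "y * real p \<le> x" using p1 by (simp add: field_simps)
      moreover have "y * real p > 1 * real p" using p1 assms(4) by (intro mult_strict_right_mono) auto
      ultimately show False using assms(3) by linarith
    qed
  qed
  then show ?thesis using k p1 by simp
qed



definition ramp :: "real \<Rightarrow> real \<Rightarrow> real" where
  "ramp v t = max 0 (t - v)"

lemma ramp_right:
  assumes "x > 0"
  shows "eventually (\<lambda>e. (ramp v ((1 + e) * x) - ramp v x) / e = (if v \<le> x then x else 0)) (at_right 0)"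
proof (cases "v \<le> x")
  case True
  show ?thesis unfolding eventually_at_right_field
  proof (intro exI[of _ 1] conjI allI impI)
    fix e :: real assume "e > 0" "e < 1"
    then have "(1 + e) * x \<ge> x" using assms by simp
    then have "ramp v ((1 + e) * x) - ramp v x = e * x" using True
      unfolding ramp_def by (simp add: algebra_simps)
    then show "(ramp v ((1 + e) * x) - ramp v x) / e = (if v \<le> x then x else 0)"
      using True \<open>e > 0\<close> by simp
  qed simp
next
  case False
  show ?thesis unfolding eventually_at_right_field
  proof (intro exI[of _ "(v - x) / x"] conjI allI impI)
    show "(v - x) / x > 0" using False assms by simp
    fix e :: real assume "e > 0" "e < (v - x) / x"
    then have "e * x < v - x" using assms by (simp add: field_simps)
    then have "(1 + e) * x < v" by (simp add: algebra_simps)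
    then have "ramp v ((1 + e) * x) - ramp v x = 0" using False
      unfolding ramp_def by simp
    then show "(ramp v ((1 + e) * x) - ramp v x) / e = (if v \<le> x then x else 0)"
      using False by simp
  qed
qed

lemma ramp_left:
  assumes "x > 0"
  shows "eventually (\<lambda>e. (ramp v ((1 + e) * x) - ramp v x) / e = (if v < x then x else 0)) (at_left 0)"
proof (cases "v < x")
  case True
  show ?thesis unfolding eventually_at_left_field
  proof (intro exI[of _ "(v - x) / x"] conjI allI impI)
    show "(v - x) / x < 0" using True assms by (simp add: divide_neg_pos)
    fix e :: real assume "e > (v - x) / x" "e < 0"
    then have "e * x > v - x" using assms by (simp add: field_simps)
    then have "(1 + e) * x > v" by (simp add: algebra_simps)
    moreover have "(1 + e) * x \<le> x" using \<open>e < 0\<close> assms by (simp add: mult_le_cancel_right1)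
    ultimately have "ramp v ((1 + e) * x) - ramp v x = e * x" using True
      unfolding ramp_def by (simp add: algebra_simps)
    then show "(ramp v ((1 + e) * x) - ramp v x) / e = (if v < x then x else 0)"
      using True \<open>e < 0\<close> by simp
  qed
next
  case False
  show ?thesis unfolding eventually_at_left_field
  proof (intro exI[of _ "-1"] conjI allI impI)
    fix e :: real assume "e > -1" "e < 0"
    then have "(1 + e) * x \<le> x" using assms by (simp add: mult_le_cancel_right1)
    then have "ramp v ((1 + e) * x) - ramp v x = 0" using False
      unfolding ramp_def by simp
    then show "(ramp v ((1 + e) * x) - ramp v x) / e = (if v < x then x else 0)"
      using False by simp
  qed simp
qed

definition RR :: "real \<Rightarrow> real \<Rightarrow> (real \<Rightarrow> real) \<Rightarrow> real \<Rightarrow> real \<Rightarrow> 'i set \<Rightarrow> ('i \<Rightarrow> real) \<Rightarrow> ('i \<Rightarrow> real) \<Rightarrow> bool" where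
  "RR a b f \<alpha> \<beta> J c v \<longleftrightarrow> finite J \<and> (\<forall>t\<in>{a..b}. f t = \<alpha> + \<beta> * t + (\<Sum>j\<in>J. c j * ramp (v j) t))"

lemma quot_sum:
  assumes "finite J" "e \<noteq> 0"
    "f ((1 + e) * x) = \<alpha> + \<beta> * ((1 + e) * x) + (\<Sum>j\<in>J. c j * ramp (v j) ((1 + e) * x))"
    "f x = \<alpha> + \<beta> * x + (\<Sum>j\<in>J. c j * ramp (v j) x)"
  shows "(f ((1 + e) * x) - f x) / e = \<beta> * x + (\<Sum>j\<in>J. c j * ((ramp (v j) ((1 + e) * x) - ramp (v j) x) / e))"
proof -
  have "f ((1 + e) * x) - f x = \<beta> * (e * x) + (\<Sum>j\<in>J. c j * (ramp (v j) ((1 + e) * x) - ramp (v j) x))"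
  proof -
    have "(\<Sum>j\<in>J. c j * (ramp (v j) ((1 + e) * x) - ramp (v j) x)) = (\<Sum>j\<in>J. c j * ramp (v j) ((1 + e) * x)) - (\<Sum>j\<in>J. c j * ramp (v j) x)"
      by (simp add: right_diff_distrib sum_subtractf)
    then show ?thesis unfolding assms(3,4) by (simp add: algebra_simps)
  qed
  then show ?thesis using assms(2)
    by (simp add: add_divide_distrib sum_divide_distrib)
qed

lemma RR_right:
  assumes "RR a b f \<alpha> \<beta> J c v" "a < x" "x < b" "x > 0"
  shows "eventually (\<lambda>e. (f ((1 + e) * x) - f x) / e = x * (\<beta> + (\<Sum>j\<in>J. if v j \<le> x then c j else 0))) (at_right 0)"
proof -
  have fin: "finite J" and eq: "\<forall>t\<in>{a..b}. f t = \<alpha> + \<beta> * t + (\<Sum>j\<in>J. c j * ramp (v j) t)"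
    using assms(1) unfolding RR_def by auto
  have ev1: "eventually (\<lambda>e. \<forall>j\<in>J. (ramp (v j) ((1 + e) * x) - ramp (v j) x) / e = (if v j \<le> x then x else 0)) (at_right 0)"
    using fin ramp_right[OF assms(4)] by (intro eventually_ball_finite) auto
  have ev2: "eventually (\<lambda>e::real. e > 0 \<and> e < (b - x) / x) (at_right 0)"
    unfolding eventually_at_right_field using assms by (intro exI[of _ "(b - x) / x"]) auto
  show ?thesis using ev1 ev2
  proof eventually_elim
    case (elim e)
    then have "e * x < b - x" using assms by (simp add: field_simps)
    moreover have "e * x > 0" using elim assms by simp
    moreover have e1: "(1 + e) * x = x + e * x" by (simp add: algebra_simps)
    ultimately have "(1 + e) * x \<in> {a..b}" using assms(2) unfolding e1 atLeastAtMost_iff by linarith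
    moreover have "x \<in> {a..b}" using assms by auto
    ultimately have "(f ((1 + e) * x) - f x) / e = \<beta> * x + (\<Sum>j\<in>J. c j * ((ramp (v j) ((1 + e) * x) - ramp (v j) x) / e))"
      using elim eq fin by (intro quot_sum) auto
    also have "\<dots> = \<beta> * x + (\<Sum>j\<in>J. c j * (if v j \<le> x then x else 0))"
      using elim by (intro arg_cong2[where f="(+)"] sum.cong) auto
    also have "\<dots> = x * (\<beta> + (\<Sum>j\<in>J. if v j \<le> x then c j else 0))"
      by (simp add: algebra_simps sum_distrib_left if_distrib cong: if_cong)
    finally show ?case .
  qed
qed

lemma RR_left:
  assumes "RR a b f \<alpha> \<beta> J c v" "a < x" "x < b" "x > 0"
  shows "eventually (\<lambda>e. (f ((1 + e) * x) - f x) / e = x * (\<beta> + (\<Sum>j\<in>J. if v j < x then c j else 0))) (at_left 0)"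
proof -
  have fin: "finite J" and eq: "\<forall>t\<in>{a..b}. f t = \<alpha> + \<beta> * t + (\<Sum>j\<in>J. c j * ramp (v j) t)"
    using assms(1) unfolding RR_def by auto
  have ev1: "eventually (\<lambda>e. \<forall>j\<in>J. (ramp (v j) ((1 + e) * x) - ramp (v j) x) / e = (if v j < x then x else 0)) (at_left 0)"
    using fin ramp_left[OF assms(4)] by (intro eventually_ball_finite) auto
  have ev2: "eventually (\<lambda>e::real. e < 0 \<and> e > (a - x) / x) (at_left 0)"
    unfolding eventually_at_left_field using assms by (intro exI[of _ "(a - x) / x"]) (auto simp: divide_neg_pos)
  show ?thesis using ev1 ev2
  proof eventually_elim
    case (elim e)
    then have "e * x > a - x" using assms by (simp add: field_simps)
    moreover have "(1 + e) * x \<le> x" using elim assms by (simp add: mult_le_cancel_right1)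
    ultimately have "(1 + e) * x \<in> {a..b}" using elim assms by (auto simp: algebra_simps)
    moreover have "x \<in> {a..b}" using assms by auto
    ultimately have "(f ((1 + e) * x) - f x) / e = \<beta> * x + (\<Sum>j\<in>J. c j * ((ramp (v j) ((1 + e) * x) - ramp (v j) x) / e))"
      using elim eq fin by (intro quot_sum) auto
    also have "\<dots> = \<beta> * x + (\<Sum>j\<in>J. c j * (if v j < x then x else 0))"
      using elim by (intro arg_cong2[where f="(+)"] sum.cong) auto
    also have "\<dots> = x * (\<beta> + (\<Sum>j\<in>J. if v j < x then c j else 0))"
      by (simp add: algebra_simps sum_distrib_left if_distrib cong: if_cong)
    finally show ?case .
  qed
qed

lemma Lim_ev_const:
  assumes "eventually (\<lambda>e. g e = L) F" "F \<noteq> bot"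
  shows "Lim F g = L"
  using tendsto_Lim[OF _ tendsto_eventually[OF assms(1)]] assms(2) by simp

lemma RR_Ord:
  assumes "RR a b f \<alpha> \<beta> J c v" "a < x" "x < b" "x > 0"
  shows "Ord_at f x = x * (\<Sum>j\<in>J. if v j = x then c j else 0)"
proof -
  have fin: "finite J" using assms(1) unfolding RR_def by auto
  have "Ord_at f x = x * (\<beta> + (\<Sum>j\<in>J. if v j \<le> x then c j else 0)) - x * (\<beta> + (\<Sum>j\<in>J. if v j < x then c j else 0))"
    unfolding Ord_at_def
    using Lim_ev_const[OF RR_right[OF assms]] Lim_ev_const[OF RR_left[OF assms]] by simp
  also have "\<dots> = x * (\<Sum>j\<in>J. (if v j \<le> x then c j else 0) - (if v j < x then c j else 0))"
    by (simp add: algebra_simps sum_subtractf)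
  also have "\<dots> = x * (\<Sum>j\<in>J. if v j = x then c j else 0)"
    by (intro arg_cong2[where f="(*)"] sum.cong) auto
  finally show ?thesis .
qed

lemma RR_pw:
  assumes "RR a b f \<alpha> \<beta> J c v" "p > 0" "\<beta> \<in> Hp p" "\<And>j. j \<in> J \<Longrightarrow> c j \<in> Hp p" "a \<le> b"
  shows "\<exists>S. finite S \<and> a \<in> S \<and> b \<in> S \<and> S \<subseteq> {a..b} \<and>
          (\<forall>x\<in>S. \<forall>y\<in>S. x < y \<and> {x<..<y} \<inter> S = {} \<longrightarrow>
             (\<exists>s c. s \<in> Hp p \<and> (\<forall>t\<in>{x..y}. f t = s * t + c)))"
proof -
  have fin: "finite J" and eq: "\<forall>t\<in>{a..b}. f t = \<alpha> + \<beta> * t + (\<Sum>j\<in>J. c j * ramp (v j) t)"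
    using assms(1) unfolding RR_def by auto
  define S where "S = {a, b} \<union> (v ` J \<inter> {a..b})"
  have finS: "finite S" unfolding S_def using fin by auto
  have abS: "a \<in> S" "b \<in> S" "S \<subseteq> {a..b}" unfolding S_def using assms(5) by auto
  have main: "\<exists>s c. s \<in> Hp p \<and> (\<forall>t\<in>{x..y}. f t = s * t + c)"
    if xy: "x \<in> S" "y \<in> S" "x < y" "{x<..<y} \<inter> S = {}" for x y
  proof -
    define P where "P j \<longleftrightarrow> v j \<le> x" for j
    define s where "s = \<beta> + (\<Sum>j\<in>J. if P j then c j else 0)"
    define d where "d = \<alpha> + (\<Sum>j\<in>J. if P j then - (c j * v j) else 0)"
    have "s \<in> Hp p" unfolding s_def using assms(2,3,4)
      by (intro Hp_add Hp_sum) auto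
    moreover have "f t = s * t + d" if t: "t \<in> {x..y}" for t
    proof -
      have xyab: "x \<in> {a..b}" "y \<in> {a..b}" using xy abS(3) by auto
      have r: "c j * ramp (v j) t = t * (if P j then c j else 0) + (if P j then - (c j * v j) else 0)"
        if j: "j \<in> J" for j
      proof (cases "P j")
        case True then show ?thesis using t unfolding P_def ramp_def by (auto simp: algebra_simps)
      next
        case False
        have "v j \<ge> y"
        proof (rule ccontr)
          assume "\<not> v j \<ge> y"
          then have "v j \<in> {x<..<y}" using False unfolding P_def by auto
          moreover have "v j \<in> S" unfolding S_def using j \<open>v j \<in> {x<..<y}\<close> xyab by auto
          ultimately show False using xy(4) by auto
        qed
        then show ?thesis using False t unfolding ramp_def by auto
      qed
      have "f t = \<alpha> + \<beta> * t + (\<Sum>j\<in>J. c j * ramp (v j) t)" using eq t xyab by auto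
      also have "\<dots> = \<alpha> + \<beta> * t + (\<Sum>j\<in>J. t * (if P j then c j else 0) + (if P j then - (c j * v j) else 0))"
        using r by (intro arg_cong2[where f="(+)"] sum.cong) auto
      also have "\<dots> = s * t + d" unfolding s_def d_def
        by (simp add: sum.distrib sum_distrib_left[symmetric] algebra_simps)
      finally show ?thesis .
    qed
    ultimately show ?thesis by blast
  qed
  show ?thesis
    apply (rule exI[of _ S])
    apply (intro conjI finS abS ballI impI)
    apply (erule conjE)+
    apply (rule main)
    apply assumption+
    done
qed

lemma ramp_cont: "continuous_on UNIV (ramp v)"
  unfolding ramp_def by (intro continuous_intros)

lemma RR_isCont:
  assumes "RR a b f \<alpha> \<beta> J c v" "a < t" "t < b"
  shows "isCont f t"
proof -
  have fin: "finite J" and eq: "\<forall>t\<in>{a..b}. f t = \<alpha> + \<beta> * t + (\<Sum>j\<in>J. c j * ramp (v j) t)"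
    using assms(1) unfolding RR_def by auto
  let ?g = "\<lambda>t. \<alpha> + \<beta> * t + (\<Sum>j\<in>J. c j * ramp (v j) t)"
  have "eventually (\<lambda>s. s \<in> {a<..<b}) (nhds t)"
    using assms by (intro eventually_nhds_in_open) auto
  then have ev: "eventually (\<lambda>s. f s = ?g s) (nhds t)"
    by eventually_elim (use eq in auto)
  have "isCont ?g t"
    unfolding ramp_def by (intro continuous_intros)
  then show ?thesis using isCont_cong[OF ev] by simp
qed



definition consec :: "nat \<Rightarrow> real set \<Rightarrow> (real \<Rightarrow> real) \<Rightarrow> bool" where
  "consec p S f \<longleftrightarrow> (\<forall>x\<in>S. \<forall>y\<in>S. x < y \<and> {x<..<y} \<inter> S = {} \<longrightarrow>
             (\<exists>s c. s \<in> Hp p \<and> (\<forall>t\<in>{x..y}. f t = s * t + c)))"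

lemma part_rep:
  assumes "finite S" "a \<in> S" "b \<in> S" "S \<subseteq> {a..b}" "a < b" "consec p S f" "p > 0"
  shows "\<exists>\<alpha> \<beta> c J. J \<subseteq> {a<..<b} \<and> \<beta> \<in> Hp p \<and> (\<forall>j\<in>J. c j \<in> Hp p) \<and> RR a b f \<alpha> \<beta> J c id"
  using assms
proof (induction "card S" arbitrary: S b rule: less_induct)
  case less
  define S' where "S' = S - {b}"
  have finS': "finite S'" "a \<in> S'" using less.prems unfolding S'_def by auto
  define b' where "b' = Max S'"
  have b'S': "b' \<in> S'" unfolding b'_def using finS' Max_in by blast
  have ab': "a \<le> b'" unfolding b'_def using finS' Max_ge by blast
  have b'b: "b' < b" using b'S' less.prems unfolding S'_def by auto
  have S'sub: "S' \<subseteq> {a..b'}"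
  proof
    fix x assume x: "x \<in> S'"
    then have "a \<le> x" using less.prems(4) unfolding S'_def by auto
    moreover have "x \<le> b'" unfolding b'_def using Max_ge[OF finS'(1) x] .
    ultimately show "x \<in> {a..b'}" by simp
  qed
  have gap: "{b'<..<b} \<inter> S = {}"
  proof -
    { fix w assume w: "w \<in> S" "b' < w" "w < b"
      then have "w \<in> S'" unfolding S'_def by auto
      then have "w \<le> b'" unfolding b'_def using finS' Max_ge by blast
      then have False using w by simp }
    then show ?thesis by auto
  qed
  obtain s2 d2 where s2: "s2 \<in> Hp p" "\<forall>t\<in>{b'..b}. f t = s2 * t + d2"
    using less.prems(6) b'S' less.prems(3) b'b gap unfolding consec_def S'_def by blast
  show ?case
  proof (cases "b' = a")
    case True
    have "RR a b f d2 s2 ({}::real set) (\<lambda>_. 0) id"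
      unfolding RR_def using s2 True by (auto simp: mult.commute)
    then show ?thesis using s2 by blast
  next
    case False
    then have ab'': "a < b'" using ab' by simp
    have cons': "consec p S' f" unfolding consec_def
    proof (intro ballI impI)
      fix x y assume xy: "x \<in> S'" "y \<in> S'" "x < y \<and> {x<..<y} \<inter> S' = {}"
      have "y \<le> b'" using xy S'sub by auto
      then have "{x<..<y} \<inter> S = {}" using xy b'b unfolding S'_def by auto
      then show "\<exists>s c. s \<in> Hp p \<and> (\<forall>t\<in>{x..y}. f t = s * t + c)"
        using less.prems(6) xy unfolding consec_def S'_def by auto
    qed
    have "card S' < card S" unfolding S'_def using less.prems(1,3) by (rule card_Diff1_less)
    then obtain \<alpha> \<beta> c J where IH: "J \<subseteq> {a<..<b'}" "\<beta> \<in> Hp p" "\<forall>j\<in>J. c j \<in> Hp p" "RR a b' f \<alpha> \<beta> J c id"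
      using less.hyps[of S' b'] finS' b'S' S'sub ab'' cons' less.prems(7) by blast
    have finJ: "finite J" and eqJ: "\<forall>t\<in>{a..b'}. f t = \<alpha> + \<beta> * t + (\<Sum>j\<in>J. c j * ramp j t)"
      using IH(4) unfolding RR_def by auto
    define \<kappa> where "\<kappa> = s2 - (\<beta> + (\<Sum>j\<in>J. c j))"
    define c' where "c' = c(b' := \<kappa>)"
    have b'J: "b' \<notin> J" using IH(1) by auto
    have sumJ: "(\<Sum>j\<in>insert b' J. c' j * ramp j t) = \<kappa> * ramp b' t + (\<Sum>j\<in>J. c j * ramp j t)" for t
    proof -
      have "(\<Sum>j\<in>insert b' J. c' j * ramp j t) = c' b' * ramp b' t + (\<Sum>j\<in>J. c' j * ramp j t)"
        using finJ b'J by simp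
      moreover have "(\<Sum>j\<in>J. c' j * ramp j t) = (\<Sum>j\<in>J. c j * ramp j t)"
        using b'J unfolding c'_def by (intro sum.cong) auto
      ultimately show ?thesis unfolding c'_def by simp
    qed
    have "RR a b f \<alpha> \<beta> (insert b' J) c' id"
      unfolding RR_def
    proof (intro conjI ballI)
      show "finite (insert b' J)" using finJ by simp
      fix t assume t: "t \<in> {a..b}"
      show "f t = \<alpha> + \<beta> * t + (\<Sum>j\<in>insert b' J. c' j * ramp (id j) t)"
      proof (cases "t \<le> b'")
        case True
        then have "ramp b' t = 0" unfolding ramp_def by simp
        then show ?thesis using eqJ t True sumJ[of t] by auto
      next
        case False
        have rj: "ramp j s = s - j" if "j \<in> J" "s \<ge> b'" for j s
          using IH(1) that unfolding ramp_def by auto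
        have e1: "(\<Sum>j\<in>J. c j * ramp j t) = (\<Sum>j\<in>J. c j * ramp j b') + (t - b') * (\<Sum>j\<in>J. c j)"
        proof -
          have "(\<Sum>j\<in>J. c j * ramp j t) = (\<Sum>j\<in>J. c j * ramp j b' + (t - b') * c j)"
          proof (intro sum.cong refl)
            fix j assume "j \<in> J"
            then have r1: "ramp j t = t - j" and r2: "ramp j b' = b' - j" using rj False by auto
            show "c j * ramp j t = c j * ramp j b' + (t - b') * c j" unfolding r1 r2 by (simp add: algebra_simps)
          qed
          then show ?thesis by (simp add: sum.distrib sum_distrib_left)
        qed
        have fb': "f b' = \<alpha> + \<beta> * b' + (\<Sum>j\<in>J. c j * ramp j b')" using eqJ ab'' by auto
        have fb'2: "f b' = s2 * b' + d2" using s2 b'b by auto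
        have ft: "f t = s2 * t + d2" using s2 t False by auto
        have rb: "ramp b' t = t - b'" using False unfolding ramp_def by simp
        have "\<alpha> + \<beta> * t + (\<Sum>j\<in>insert b' J. c' j * ramp j t) =
           \<alpha> + \<beta> * t + \<kappa> * (t - b') + ((\<Sum>j\<in>J. c j * ramp j b') + (t - b') * (\<Sum>j\<in>J. c j))"
          unfolding sumJ[of t] rb e1 by simp
        also have "\<dots> = (\<alpha> + \<beta> * b' + (\<Sum>j\<in>J. c j * ramp j b')) + s2 * (t - b')"
          unfolding \<kappa>_def by (simp add: algebra_simps)
        also have "\<dots> = s2 * t + d2" unfolding fb'[symmetric] fb'2 by (simp add: algebra_simps)
        finally show ?thesis using ft by simp
      qed
    qed
    moreover have "insert b' J \<subseteq> {a<..<b}" using IH(1) ab'' b'b by auto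
    moreover have "\<forall>j\<in>insert b' J. c' j \<in> Hp p"
      using IH(2,3) s2(1) less.prems(7) unfolding c'_def \<kappa>_def
      by (auto intro!: Hp_diff Hp_add Hp_sum)
    ultimately show ?thesis using IH(2) by blast
  qed
qed



lemma Kreal_RR:
  assumes "f \<in> Kreal p" "p > 0" "0 < a" "a < b"
  shows "\<exists>\<alpha> \<beta> c J. J \<subseteq> {a<..<b} \<and> \<beta> \<in> Hp p \<and> (\<forall>j\<in>J. c j \<in> Hp p) \<and> RR a b f \<alpha> \<beta> J c id"
proof -
  obtain S where S: "finite S" "a \<in> S" "b \<in> S" "S \<subseteq> {a..b}" "consec p S f"
    using assms unfolding Kreal_def pw_affine_Hp_def consec_def by blast
  show ?thesis using part_rep[OF S(1-4) assms(4) S(5) assms(2)] .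
qed

lemma Kreal_quot:
  assumes "f \<in> Kreal p" "p > 0" "x > 0"
  shows "\<exists>R L. eventually (\<lambda>e. (f ((1 + e) * x) - f x) / e = R) (at_right 0) \<and>
               eventually (\<lambda>e. (f ((1 + e) * x) - f x) / e = L) (at_left 0)"
proof -
  obtain \<alpha> \<beta> c J where rr: "RR (x/2) (2*x) f \<alpha> \<beta> J c id"
    using Kreal_RR[OF assms(1,2), of "x/2" "2*x"] assms by auto
  have h: "x/2 < x" "x < 2*x" using assms by auto
  show ?thesis using RR_right[OF rr h assms(3)] RR_left[OF rr h assms(3)] by blast
qed

lemma Ord_add:
  assumes "f \<in> Kreal p" "g \<in> Kreal p" "p > 0" "x > 0"
  shows "Ord_at (\<lambda>t. f t + g t) x = Ord_at f x + Ord_at g x"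
proof -
  obtain R1 L1 where 1: "eventually (\<lambda>e. (f ((1 + e) * x) - f x) / e = R1) (at_right 0)"
        "eventually (\<lambda>e. (f ((1 + e) * x) - f x) / e = L1) (at_left 0)"
    using Kreal_quot[OF assms(1,3,4)] by blast
  obtain R2 L2 where 2: "eventually (\<lambda>e. (g ((1 + e) * x) - g x) / e = R2) (at_right 0)"
        "eventually (\<lambda>e. (g ((1 + e) * x) - g x) / e = L2) (at_left 0)"
    using Kreal_quot[OF assms(2,3,4)] by blast
  have s: "(f ((1 + e) * x) + g ((1 + e) * x) - (f x + g x)) / e =
     (f ((1 + e) * x) - f x) / e + (g ((1 + e) * x) - g x) / e" for e
    by (simp add: diff_divide_distrib add_divide_distrib)
  have "eventually (\<lambda>e. (f ((1 + e) * x) + g ((1 + e) * x) - (f x + g x)) / e = R1 + R2) (at_right 0)"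
    using 1(1) 2(1) by eventually_elim (simp add: s)
  moreover have "eventually (\<lambda>e. (f ((1 + e) * x) + g ((1 + e) * x) - (f x + g x)) / e = L1 + L2) (at_left 0)"
    using 1(2) 2(2) by eventually_elim (simp add: s)
  ultimately have A: "Lim (at_right 0) (\<lambda>e. (f ((1 + e) * x) + g ((1 + e) * x) - (f x + g x)) / e) = R1 + R2"
    and B: "Lim (at_left 0) (\<lambda>e. (f ((1 + e) * x) + g ((1 + e) * x) - (f x + g x)) / e) = L1 + L2"
    by (auto intro!: Lim_ev_const)
  show ?thesis unfolding Ord_at_def
    using A B Lim_ev_const[OF 1(1)] Lim_ev_const[OF 1(2)] Lim_ev_const[OF 2(1)] Lim_ev_const[OF 2(2)]
    by simp
qed

lemma Ord_zero: "Ord_at (\<lambda>_. 0) x = 0"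
proof -
  have "Lim (at_right 0) (\<lambda>e::real. 0::real) = 0" by (rule tendsto_Lim) auto
  moreover have "Lim (at_left 0) (\<lambda>e::real. 0::real) = 0" by (rule tendsto_Lim) auto
  ultimately show ?thesis unfolding Ord_at_def by simp
qed

lemma RR_add:
  assumes "RR a b f \<alpha>1 \<beta>1 J1 c1 id" "RR a b g \<alpha>2 \<beta>2 J2 c2 id"
  shows "RR a b (\<lambda>t. f t + g t) (\<alpha>1 + \<alpha>2) (\<beta>1 + \<beta>2) (J1 \<union> J2)
           (\<lambda>j. (if j \<in> J1 then c1 j else 0) + (if j \<in> J2 then c2 j else 0)) id"
proof -
  have f1: "finite J1" and e1: "\<forall>t\<in>{a..b}. f t = \<alpha>1 + \<beta>1 * t + (\<Sum>j\<in>J1. c1 j * ramp j t)"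
    using assms(1) unfolding RR_def by auto
  have f2: "finite J2" and e2: "\<forall>t\<in>{a..b}. g t = \<alpha>2 + \<beta>2 * t + (\<Sum>j\<in>J2. c2 j * ramp j t)"
    using assms(2) unfolding RR_def by auto
  have s1: "(\<Sum>j\<in>J1 \<union> J2. (if j \<in> J1 then c1 j else 0) * ramp j t) = (\<Sum>j\<in>J1. c1 j * ramp j t)" for t
    using f1 f2 by (intro sum.mono_neutral_cong_right) auto
  have s2: "(\<Sum>j\<in>J1 \<union> J2. (if j \<in> J2 then c2 j else 0) * ramp j t) = (\<Sum>j\<in>J2. c2 j * ramp j t)" for t
    using f1 f2 by (intro sum.mono_neutral_cong_right) auto
  show ?thesis unfolding RR_def
    using f1 f2 e1 e2 s1 s2 by (simp add: distrib_right sum.distrib algebra_simps)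
qed

lemma Kreal_add:
  assumes "f \<in> Kreal p" "g \<in> Kreal p" "p > 0"
  shows "(\<lambda>t. f t + g t) \<in> Kreal p"
proof -
  have cont: "continuous_on {0<..} (\<lambda>t. f t + g t)"
    using assms unfolding Kreal_def pw_affine_Hp_def by (auto intro: continuous_on_add)
  have per: "\<forall>l>0. f (real p * l) + g (real p * l) = f l + g l"
    using assms unfolding Kreal_def by auto
  have pw: "\<exists>S. finite S \<and> a \<in> S \<and> b \<in> S \<and> S \<subseteq> {a..b} \<and>
          (\<forall>x\<in>S. \<forall>y\<in>S. x < y \<and> {x<..<y} \<inter> S = {} \<longrightarrow>
             (\<exists>s c. s \<in> Hp p \<and> (\<forall>t\<in>{x..y}. f t + g t = s * t + c)))"
    if ab: "0 < a" "a < b" for a b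
  proof -
    obtain \<alpha>1 \<beta>1 c1 J1 where 1: "\<beta>1 \<in> Hp p" "\<forall>j\<in>J1. c1 j \<in> Hp p" "RR a b f \<alpha>1 \<beta>1 J1 c1 id"
      using Kreal_RR[OF assms(1,3) ab] by blast
    obtain \<alpha>2 \<beta>2 c2 J2 where 2: "\<beta>2 \<in> Hp p" "\<forall>j\<in>J2. c2 j \<in> Hp p" "RR a b g \<alpha>2 \<beta>2 J2 c2 id"
      using Kreal_RR[OF assms(2,3) ab] by blast
    show ?thesis
      by (rule RR_pw[OF RR_add[OF 1(3) 2(3)] assms(3)]) (use 1 2 ab assms(3) in \<open>auto intro!: Hp_add\<close>)
  qed
  show ?thesis unfolding Kreal_def pw_affine_Hp_def using cont per pw by auto
qed

lemma Kreal_zero: "(\<lambda>_. 0) \<in> Kreal p" if "p > 0"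
proof -
  have "\<exists>S. finite S \<and> a \<in> S \<and> b \<in> S \<and> S \<subseteq> {a..b} \<and>
          (\<forall>x\<in>S. \<forall>y\<in>S. x < y \<and> {x<..<y} \<inter> S = {} \<longrightarrow>
             (\<exists>s c. s \<in> Hp p \<and> (\<forall>t\<in>{x..y}. (0::real) = s * t + c)))" if "a < b" for a b :: real
    using that by (intro exI[of _ "{a,b}"]) (auto intro!: exI[of _ 0])
  then show ?thesis unfolding Kreal_def pw_affine_Hp_def by (auto simp: continuous_on_const)
qed

lemma Kreal_sum:
  assumes "finite Q" "\<And>q. q \<in> Q \<Longrightarrow> F q \<in> Kreal p" "p > 0"
  shows "(\<lambda>t. \<Sum>q\<in>Q. F q t) \<in> Kreal p"
  using assms
proof (induction Q rule: finite_induct)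
  case empty then show ?case using Kreal_zero by simp
next
  case (insert q Q)
  then show ?case using Kreal_add[of "F q" p "\<lambda>t. \<Sum>q\<in>Q. F q t"] by simp
qed

lemma Ord_sum:
  assumes "finite Q" "\<And>q. q \<in> Q \<Longrightarrow> F q \<in> Kreal p" "p > 0" "x > 0"
  shows "Ord_at (\<lambda>t. \<Sum>q\<in>Q. F q t) x = (\<Sum>q\<in>Q. Ord_at (F q) x)"
  using assms
proof (induction Q rule: finite_induct)
  case empty then show ?case using Ord_zero by simp
next
  case (insert q Q)
  have "(\<lambda>t. \<Sum>q\<in>Q. F q t) \<in> Kreal p" using Kreal_sum insert by auto
  then show ?case using Ord_add[of "F q" p "\<lambda>t. \<Sum>q\<in>Q. F q t"] insert by simp
qed

lemma pdiv_sum: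
  assumes "finite Q" "\<And>q. q \<in> Q \<Longrightarrow> F q \<in> Kreal p" "p > 0" "prime p"
  shows "pdiv p (\<lambda>t. \<Sum>q\<in>Q. F q t) H = (\<Sum>q\<in>Q. pdiv p (F q) H)"
  using Ord_sum[OF assms(1-3)] rep_props[of H p] unfolding pdiv_def by auto

lemma Ord_scale:
  assumes "c > 0" "x > 0" "\<forall>t>0. f (c * t) = f t"
  shows "Ord_at f (c * x) = Ord_at f x"
proof -
  have q: "(f ((1 + e) * (c * x)) - f (c * x)) / e = (f ((1 + e) * x) - f x) / e" if "e > -1" for e
  proof -
    have "(1 + e) * x > 0" using that assms by simp
    then have "f ((1 + e) * (c * x)) = f ((1 + e) * x)" using assms(3)
      by (metis mult.left_commute)
    moreover have "f (c * x) = f x" using assms by auto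
    ultimately show ?thesis by simp
  qed
  have "eventually (\<lambda>e::real. e > -1) (at_right 0)"
    unfolding eventually_at_right_field by (intro exI[of _ 1]) auto
  then have r: "eventually (\<lambda>e. (f ((1 + e) * (c * x)) - f (c * x)) / e = (f ((1 + e) * x) - f x) / e) (at_right 0)"
    by eventually_elim (use q in auto)
  have "eventually (\<lambda>e::real. e > -1) (at_left 0)"
    unfolding eventually_at_left_field by (intro exI[of _ "-1"]) auto
  then have l: "eventually (\<lambda>e. (f ((1 + e) * (c * x)) - f (c * x)) / e = (f ((1 + e) * x) - f x) / e) (at_left 0)"
    by eventually_elim (use q in auto)
  show ?thesis unfolding Ord_at_def using Lim_cong[OF r refl] Lim_cong[OF l refl] by simp
qed

lemma Kreal_pow_per:
  assumes "f \<in> Kreal p" "p > 0" "t > 0"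
  shows "f (real p ^ n * t) = f t"
proof (induction n)
  case (Suc n)
  have "real p ^ n * t > 0" using assms by simp
  then have "f (real p * (real p ^ n * t)) = f (real p ^ n * t)"
    using assms(1) unfolding Kreal_def by blast
  then show ?case using Suc by (simp add: mult.assoc)
qed simp

lemma Kreal_powr_per:
  assumes "f \<in> Kreal p" "p > 0" "t > 0"
  shows "f (real p powr of_int k * t) = f t"
proof (cases "k \<ge> 0")
  case True
  then show ?thesis using Kreal_pow_per[OF assms] assms(2) by (simp add: powr_int_cases)
next
  case False
  define m where "m = nat (-k)"
  have "t / real p ^ m > 0" using assms by simp
  from Kreal_pow_per[OF assms(1,2) this, of m] assms(2)
  have "f (t / real p ^ m) = f t" by simp
  then show ?thesis using False assms(2) unfolding m_def by (simp add: powr_int_cases)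
qed

lemma pdiv_class:
  assumes "prime p" "f \<in> Kreal p" "x > 0" "H = phi p x"
  shows "pdiv p f H = Ord_at f x"
proof -
  have p0: "p > 0" using assms(1) prime_gt_0_nat by blast
  have HC: "H \<in> Cp p" using assms Cp_iff by blast
  obtain k :: int where k: "rep p H = real p powr of_int k * x"
    using phi_eq_unit[OF assms(1,3), of "rep p H"] rep_props[OF HC] assms(4) by metis
  have "Ord_at f (real p powr of_int k * x) = Ord_at f x"
    using Kreal_powr_per[OF assms(2) p0] p0 assms(3) by (intro Ord_scale) auto
  then show ?thesis unfolding pdiv_def using HC k by simp
qed



lemma deg_nonneg:
  assumes pr: "prime p" and dv: "is_divisor p D" and fK: "f \<in> Kreal p"
    and pos: "\<forall>H\<in>Cp p. D H + pdiv p f H \<ge> 0"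
  shows "deg D \<ge> 0"
proof -
  have p0: "p > 0" using pr prime_gt_0_nat by blast
  have p1: "real p > 1" using pr prime_gt_1_nat by simp
  obtain \<alpha> \<beta> c J where J: "J \<subseteq> {1/2<..<2 * real p}" and rr: "RR (1/2) (2 * real p) f \<alpha> \<beta> J c id"
    using Kreal_RR[OF fK p0, of "1/2" "2 * real p"] p1 by auto
  have finJ: "finite J" and eqJ: "\<forall>t\<in>{1/2..2 * real p}. f t = \<alpha> + \<beta> * t + (\<Sum>j\<in>J. c j * ramp j t)"
    using rr unfolding RR_def by auto
  define T where "T = {j\<in>J. 1 < j \<and> j \<le> real p}"
  have finT: "finite T" unfolding T_def using finJ by simp
  have Ordx: "Ord_at f x = (if x \<in> J then x * c x else 0)" if x: "1 < x" "x \<le> real p" for x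
  proof -
    have "Ord_at f x = x * (\<Sum>j\<in>J. if id j = x then c j else 0)"
      using RR_Ord[OF rr] x p1 by auto
    also have "\<dots> = (if x \<in> J then x * c x else 0)" using finJ by (simp add: sum.delta)
    finally show ?thesis .
  qed
  \<comment> \<open>the degree of the principal divisor is zero\<close>
  define A where "A = (\<Sum>j\<in>J. if j \<le> 1 then c j else 0)"
  define Cs where "Cs = (\<Sum>j\<in>J. if 1 < j \<and> j \<le> real p then c j else 0)"
  define W where "W = (\<Sum>j\<in>J. if 1 < j \<and> j \<le> real p then c j * j else 0)"
  have r1: "eventually (\<lambda>e. (f ((1 + e) * 1) - f 1) / e = 1 * (\<beta> + (\<Sum>j\<in>J. if id j \<le> 1 then c j else 0))) (at_right 0)"
    by (rule RR_right[OF rr]) (use p1 in auto)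
  have rp: "eventually (\<lambda>e. (f ((1 + e) * real p) - f (real p)) / e = real p * (\<beta> + (\<Sum>j\<in>J. if id j \<le> real p then c j else 0))) (at_right 0)"
    by (rule RR_right[OF rr]) (use p1 in auto)
  have per: "f (real p * l) = f l" if "l > 0" for l using fK that unfolding Kreal_def by auto
  have "eventually (\<lambda>e::real. e > 0) (at_right 0)"
    unfolding eventually_at_right_field by (intro exI[of _ 1]) auto
  with r1 rp have "eventually (\<lambda>e. (f ((1 + e) * 1) - f 1) / e = 1 * (\<beta> + (\<Sum>j\<in>J. if id j \<le> 1 then c j else 0))
       \<and> (f ((1 + e) * real p) - f (real p)) / e = real p * (\<beta> + (\<Sum>j\<in>J. if id j \<le> real p then c j else 0))
       \<and> e > 0) (at_right 0)"
    by (intro eventually_conj)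
  then obtain e where e: "(f ((1 + e) * 1) - f 1) / e = 1 * (\<beta> + (\<Sum>j\<in>J. if id j \<le> 1 then c j else 0))"
       "(f ((1 + e) * real p) - f (real p)) / e = real p * (\<beta> + (\<Sum>j\<in>J. if id j \<le> real p then c j else 0))"
       "e > 0"
    using eventually_happens[of _ "at_right (0::real)"] by auto
  have "f ((1 + e) * real p) = f ((1 + e) * 1)" using per[of "1 + e"] e(3) by (simp add: mult.commute)
  moreover have "f (real p) = f 1" using per[of 1] by simp
  ultimately have "1 * (\<beta> + (\<Sum>j\<in>J. if id j \<le> 1 then c j else 0)) =
                     real p * (\<beta> + (\<Sum>j\<in>J. if id j \<le> real p then c j else 0))"
    using e by simp
  then have slope: "\<beta> + A = real p * (\<beta> + (\<Sum>j\<in>J. if j \<le> real p then c j else 0))"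
    unfolding A_def by simp
  have "(\<Sum>j\<in>J. if j \<le> real p then c j else 0) = (\<Sum>j\<in>J. (if j \<le> 1 then c j else 0) + (if 1 < j \<and> j \<le> real p then c j else 0))"
    using p1 by (intro sum.cong) auto
  then have slope2: "\<beta> + A = real p * (\<beta> + A + Cs)"
    using slope unfolding A_def Cs_def by (simp add: sum.distrib add.assoc)
  have "f (real p) = f 1" using per[of 1] by simp
  then have "0 = (\<alpha> + \<beta> * real p + (\<Sum>j\<in>J. c j * ramp j (real p))) - (\<alpha> + \<beta> * 1 + (\<Sum>j\<in>J. c j * ramp j 1))"
    using eqJ p1 by auto
  also have "\<dots> = \<beta> * (real p - 1) + (\<Sum>j\<in>J. c j * (ramp j (real p) - ramp j 1))"
    by (simp add: algebra_simps sum_subtractf)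
  also have "(\<Sum>j\<in>J. c j * (ramp j (real p) - ramp j 1)) =
      (\<Sum>j\<in>J. (real p - 1) * (if j \<le> 1 then c j else 0) + real p * (if 1 < j \<and> j \<le> real p then c j else 0)
         - (if 1 < j \<and> j \<le> real p then c j * j else 0))"
  proof (intro sum.cong refl)
    fix j assume "j \<in> J"
    consider "j \<le> 1" | "1 < j \<and> j \<le> real p" | "j > real p" by linarith
    then show "c j * (ramp j (real p) - ramp j 1) = (real p - 1) * (if j \<le> 1 then c j else 0) + real p * (if 1 < j \<and> j \<le> real p then c j else 0)
         - (if 1 < j \<and> j \<le> real p then c j * j else 0)"
    proof cases
      case 1 then show ?thesis using p1 unfolding ramp_def by (simp add: algebra_simps)
    next
      case 2 then show ?thesis using p1 unfolding ramp_def by (simp add: algebra_simps)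
    next
      case 3 then show ?thesis using p1 unfolding ramp_def by (simp add: algebra_simps)
    qed
  qed
  also have "\<dots> = (real p - 1) * A + real p * Cs - W"
    unfolding A_def Cs_def W_def by (simp add: sum.distrib sum_subtractf sum_distrib_left)
  finally have "0 = \<beta> * (real p - 1) + ((real p - 1) * A + real p * Cs - W)" .
  then have W0: "W = 0" using slope2 by (simp add: algebra_simps)
  have sumT: "(\<Sum>x\<in>T. x * c x) = 0"
  proof -
    have "(\<Sum>x\<in>T. x * c x) = W" unfolding T_def W_def using finJ
      by (simp add: sum.inter_filter) (intro sum.cong refl, simp add: mult.commute)
    then show ?thesis using W0 by simp
  qed
  define B where "B = phi p ` T"
  have injT: "inj_on (phi p) T" unfolding inj_on_def T_def using phi_inj[OF pr] by auto
  have BC: "B \<subseteq> Cp p"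
  proof
    fix H assume "H \<in> B"
    then obtain x where "x \<in> T" "H = phi p x" unfolding B_def by auto
    then have "x > 0" "H = phi p x" unfolding T_def by auto
    then show "H \<in> Cp p" unfolding Cp_iff by blast
  qed
  have pdiv0: "pdiv p f H = 0" if "H \<notin> B" for H
  proof (cases "H \<in> Cp p")
    case False then show ?thesis unfolding pdiv_def by simp
  next
    case True
    obtain x where x: "1 < x" "x \<le> real p" "H = phi p x" using Cp_rep_in[OF _ True] p1 by auto
    have "x \<notin> T" using x that unfolding B_def by auto
    then have "x \<notin> J" using x unfolding T_def by auto
    then show ?thesis using pdiv_class[OF pr fK _ x(3)] Ordx[OF x(1,2)] x by simp
  qed
  have sumB: "(\<Sum>H\<in>B. pdiv p f H) = 0"
  proof -
    have "(\<Sum>H\<in>B. pdiv p f H) = (\<Sum>x\<in>T. pdiv p f (phi p x))"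
      unfolding B_def using injT by (simp add: sum.reindex)
    also have "\<dots> = (\<Sum>x\<in>T. x * c x)"
    proof (intro sum.cong refl)
      fix x assume x: "x \<in> T"
      then have "1 < x" "x \<le> real p" "x \<in> J" unfolding T_def by auto
      then show "pdiv p f (phi p x) = x * c x" using pdiv_class[OF pr fK, of x] Ordx by simp
    qed
    finally show ?thesis using sumT by simp
  qed
  define AD where "AD = {H. D H \<noteq> 0}"
  have finAD: "finite AD" using dv unfolding is_divisor_def AD_def by auto
  have finB: "finite B" unfolding B_def using finT by simp
  have ADC: "AD \<subseteq> Cp p" using dv unfolding is_divisor_def AD_def by auto
  have "deg D = (\<Sum>H\<in>AD \<union> B. D H)"
    unfolding deg_def AD_def[symmetric] using finAD finB
    by (intro sum.mono_neutral_left) (auto simp: AD_def)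
  moreover have "(\<Sum>H\<in>AD \<union> B. pdiv p f H) = 0"
  proof -
    have "(\<Sum>H\<in>AD \<union> B. pdiv p f H) = (\<Sum>H\<in>B. pdiv p f H)"
      using finAD finB pdiv0 by (intro sum.mono_neutral_right) auto
    then show ?thesis using sumB by simp
  qed
  moreover have "(\<Sum>H\<in>AD \<union> B. D H + pdiv p f H) \<ge> 0"
    using pos ADC BC by (intro sum_nonneg) auto
  ultimately show ?thesis by (simp add: sum.distrib)
qed

lemma part1:
  assumes "prime p" "is_divisor p D" "deg D < 0"
  shows "H0 p D = {\<lambda>_. -\<infinity>}"
proof -
  have "\<not> (f \<in> Kreal p \<and> (\<forall>H\<in>Cp p. D H + pdiv p f H \<ge> 0))" for f
    using deg_nonneg[OF assms(1,2), of f] assms(3) by auto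
  then have E: "{(\<lambda>x. ereal (f x)) | f. f \<in> Kreal p \<and> (\<forall>H\<in>Cp p. D H + pdiv p f H \<ge> 0)} = {}"
    by blast
  show ?thesis unfolding H0_def E by (rule Un_empty_left)
qed



definition tau :: "real \<Rightarrow> real \<Rightarrow> real \<Rightarrow> real \<Rightarrow> real \<Rightarrow> real \<Rightarrow> real" where
  "tau s r y u z w = s * ramp y w - (s + r) * ramp u w + r * ramp z w"

definition KS :: "nat \<Rightarrow> real \<Rightarrow> real \<Rightarrow> real \<Rightarrow> int set" where
  "KS p y z t = {k::int. y \<le> real p powr of_int k * t \<and> real p powr of_int k * t \<le> z}"

definition perf :: "nat \<Rightarrow> real \<Rightarrow> real \<Rightarrow> real \<Rightarrow> real \<Rightarrow> real \<Rightarrow> real \<Rightarrow> real" where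
  "perf p s r y u z t = (\<Sum>k\<in>KS p y z t. tau s r y u z (real p powr of_int k * t))"

lemma fin_powr_int:
  assumes "real p > 1" "\<alpha> > 0"
  shows "finite {k::int. \<alpha> \<le> real p powr of_int k \<and> real p powr of_int k \<le> \<gamma>}"
proof -
  have "{k::int. \<alpha> \<le> real p powr of_int k \<and> real p powr of_int k \<le> \<gamma>} \<subseteq>
        {\<lceil>log (real p) \<alpha>\<rceil> .. \<lfloor>log (real p) (max \<gamma> 1)\<rfloor>}"
  proof
    fix k assume k: "k \<in> {k::int. \<alpha> \<le> real p powr of_int k \<and> real p powr of_int k \<le> \<gamma>}"
    have pk: "real p powr of_int k > 0" using assms by simp
    have "log (real p) \<alpha> \<le> log (real p) (real p powr of_int k)"
      using k assms pk by (subst log_le_cancel_iff) auto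
    then have 1: "log (real p) \<alpha> \<le> of_int k" using assms by simp
    have "log (real p) (real p powr of_int k) \<le> log (real p) (max \<gamma> 1)"
      using k assms pk by (subst log_le_cancel_iff) auto
    then have 2: "of_int k \<le> log (real p) (max \<gamma> 1)" using assms by simp
    show "k \<in> {\<lceil>log (real p) \<alpha>\<rceil> .. \<lfloor>log (real p) (max \<gamma> 1)\<rfloor>}"
      using 1 2 by (simp add: ceiling_le_iff le_floor_iff)
  qed
  then show ?thesis by (rule finite_subset) simp
qed

lemma powr_int_inj:
  assumes "real p > 1" "real p powr of_int k = real p powr of_int k'"
  shows "k = k'"
  using assms by (simp add: powr_inj)

lemma powr_int_succ:
  assumes "real p > 0"
  shows "real p powr of_int (k + 1) = real p powr of_int k * real p"
  using assms by (simp add: powr_add)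

lemma ramp_scale:
  assumes "c > 0" shows "ramp v (c * t) = c * ramp (v / c) t"
proof (cases "0 \<le> t - v / c")
  case True
  moreover have "c * t - v = c * (t - v / c)" using assms by (simp add: field_simps)
  moreover have "0 \<le> c * (t - v / c)" using True assms by simp
  ultimately show ?thesis unfolding ramp_def by simp
next
  case False
  moreover have "c * t - v = c * (t - v / c)" using assms by (simp add: field_simps)
  moreover have "c * (t - v / c) < 0" using False assms by (simp add: mult_pos_neg)
  ultimately show ?thesis unfolding ramp_def by simp
qed

context
  fixes p :: nat and s r y u z :: real
  assumes p1: "real p > 1" and y0: "0 < y" and yu: "y < u" and uz: "u < z"
    and s0: "s > 0" and r0: "r > 0" and bal: "s * (u - y) = r * (z - u)"
    and sH: "s \<in> Hp p" and rH: "r \<in> Hp p"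
begin

lemma tau_out:
  assumes "w \<notin> {y..z}" shows "tau s r y u z w = 0"
proof (cases "w < y")
  case True then show ?thesis unfolding tau_def ramp_def using yu uz by auto
next
  case False
  then have "w > z" using assms by auto
  then have "tau s r y u z w = s * (w - y) - (s + r) * (w - u) + r * (w - z)"
    unfolding tau_def ramp_def using yu uz by auto
  also have "\<dots> = s * (u - y) - r * (z - u)" by (simp add: algebra_simps)
  finally show ?thesis using bal by simp
qed

lemma KS_fin: "t > 0 \<Longrightarrow> finite (KS p y z t)"
proof -
  assume t: "t > 0"
  have "KS p y z t = {k::int. y / t \<le> real p powr of_int k \<and> real p powr of_int k \<le> z / t}"
    unfolding KS_def using t by (auto simp: field_simps)
  then show ?thesis using fin_powr_int[OF p1, of "y / t" "z / t"] y0 t by simp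
qed

lemma perf_sum:
  assumes "t > 0" "finite F" "KS p y z t \<subseteq> F"
  shows "perf p s r y u z t = (\<Sum>k\<in>F. tau s r y u z (real p powr of_int k * t))"
  unfolding perf_def using assms
  by (intro sum.mono_neutral_left) (auto intro!: tau_out simp: KS_def)

lemma perf_per:
  assumes "t > 0" shows "perf p s r y u z (real p * t) = perf p s r y u z t"
proof -
  have p0: "real p > 0" using p1 by simp
  have e: "real p powr of_int (k + 1) * t = real p powr of_int k * (real p * t)" for k
  proof -
    have "real p powr of_int (k + 1) = real p powr of_int k * real p powr 1"
      by (simp add: powr_add)
    then show ?thesis using p0 by (simp add: mult_ac)
  qed
  have mem: "k + 1 \<in> KS p y z t \<longleftrightarrow> k \<in> KS p y z (real p * t)" for k
    unfolding KS_def mem_Collect_eq e ..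
  have img: "KS p y z t = (\<lambda>k. k + 1) ` KS p y z (real p * t)"
  proof
    show "(\<lambda>k. k + 1) ` KS p y z (real p * t) \<subseteq> KS p y z t"
      using mem by auto
    show "KS p y z t \<subseteq> (\<lambda>k. k + 1) ` KS p y z (real p * t)"
    proof
      fix k assume k: "k \<in> KS p y z t"
      have "k - 1 \<in> KS p y z (real p * t)" using k mem[of "k - 1"] by simp
      then show "k \<in> (\<lambda>k. k + 1) ` KS p y z (real p * t)" by (intro image_eqI[of _ _ "k - 1"]) auto
    qed
  qed
  have "perf p s r y u z t = (\<Sum>k\<in>KS p y z (real p * t). tau s r y u z (real p powr of_int (k + 1) * t))"
    unfolding perf_def img by (subst sum.reindex) (auto simp: inj_on_def)
  also have "\<dots> = perf p s r y u z (real p * t)" unfolding perf_def e ..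
  finally show ?thesis by simp
qed

definition coef :: "nat \<Rightarrow> real" where
  "coef i = (if i = 0 then s else if i = 1 then - (s + r) else r)"
definition pt :: "nat \<Rightarrow> real" where
  "pt i = (if i = 0 then y else if i = 1 then u else z)"

lemma tau_sum: "tau s r y u z w = (\<Sum>i\<in>{0,1,2::nat}. coef i * ramp (pt i) w)"
  unfolding tau_def coef_def pt_def by (simp add: algebra_simps)

lemma perf_RR:
  assumes "0 < a" "a < b"
  defines "F \<equiv> {k::int. y / b \<le> real p powr of_int k \<and> real p powr of_int k \<le> z / a}"
  shows "RR a b (perf p s r y u z) 0 0 (F \<times> {0,1,2::nat})
          (\<lambda>(k,i). real p powr of_int k * coef i) (\<lambda>(k,i). pt i / real p powr of_int k)"
proof -
  have finF: "finite F" unfolding F_def using fin_powr_int[OF p1, of "y / b" "z / a"] y0 assms by simp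
  have "perf p s r y u z t = (\<Sum>(k,i)\<in>F \<times> {0,1,2::nat}. real p powr of_int k * coef i * ramp (pt i / real p powr of_int k) t)"
    if t: "t \<in> {a..b}" for t
  proof -
    have tpos: "t > 0" using t assms by auto
    have "KS p y z t \<subseteq> F"
    proof
      fix k assume k: "k \<in> KS p y z t"
      have pk: "real p powr of_int k > 0" using p1 by simp
      have k1: "y \<le> real p powr of_int k * t" "real p powr of_int k * t \<le> z" using k unfolding KS_def by auto
      have "real p powr of_int k * t \<le> real p powr of_int k * b"
        using t pk by (intro mult_left_mono) auto
      moreover have "real p powr of_int k * a \<le> real p powr of_int k * t"
        using t pk by (intro mult_left_mono) auto
      ultimately have "y \<le> real p powr of_int k * b" "real p powr of_int k * a \<le> z" using k1 by linarith+
      then show "k \<in> F" unfolding F_def using assms by (simp add: field_simps)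
    qed
    then have "perf p s r y u z t = (\<Sum>k\<in>F. tau s r y u z (real p powr of_int k * t))"
      using perf_sum tpos finF by blast
    also have "\<dots> = (\<Sum>k\<in>F. \<Sum>i\<in>{0,1,2::nat}. real p powr of_int k * coef i * ramp (pt i / real p powr of_int k) t)"
    proof (intro sum.cong refl)
      fix k
      have pk: "real p powr of_int k > 0" using p1 by simp
      show "tau s r y u z (real p powr of_int k * t) = (\<Sum>i\<in>{0,1,2::nat}. real p powr of_int k * coef i * ramp (pt i / real p powr of_int k) t)"
        unfolding tau_sum ramp_scale[OF pk] by (simp add: mult_ac)
    qed
    also have "\<dots> = (\<Sum>(k,i)\<in>F \<times> {0,1,2::nat}. real p powr of_int k * coef i * ramp (pt i / real p powr of_int k) t)"
      by (rule sum.cartesian_product)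
    finally show ?thesis .
  qed
  then show ?thesis unfolding RR_def using finF by (simp add: case_prod_beta)
qed

lemma coef_Hp: "coef i \<in> Hp p"
proof -
  have p0: "p > 0" using p1 by simp
  have "- (s + r) \<in> Hp p" using Hp_uminus[OF Hp_add[OF p0 sH rH]] .
  then show ?thesis unfolding coef_def using sH rH by auto
qed

lemma pt_pos: "pt i > 0"
  unfolding pt_def using y0 yu uz by auto

lemma perf_Kreal: "perf p s r y u z \<in> Kreal p"
proof -
  have p0: "p > 0" using p1 by simp
  have "isCont (perf p s r y u z) t" if "t \<in> {0<..}" for t
  proof -
    have "t > 0" using that by simp
    then show ?thesis using RR_isCont[OF perf_RR[of "t/2" "2*t"]] by simp
  qed
  then have cont: "continuous_on {0<..} (perf p s r y u z)"
    by (intro continuous_at_imp_continuous_on) auto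
  have pw: "\<exists>S. finite S \<and> a \<in> S \<and> b \<in> S \<and> S \<subseteq> {a..b} \<and>
          (\<forall>x1\<in>S. \<forall>y1\<in>S. x1 < y1 \<and> {x1<..<y1} \<inter> S = {} \<longrightarrow>
             (\<exists>s1 c1. s1 \<in> Hp p \<and> (\<forall>t\<in>{x1..y1}. perf p s r y u z t = s1 * t + c1)))"
    if "0 < a" "a < b" for a b
    by (rule RR_pw[OF perf_RR[OF that] p0]) (use that in \<open>auto intro!: Hp_mult Hp_powr[OF p0] coef_Hp\<close>)
  show ?thesis unfolding Kreal_def pw_affine_Hp_def using cont pw perf_per by auto
qed

lemma perf_Ord:
  assumes "x > 0"
  defines "F \<equiv> {k::int. y / (2 * x) \<le> real p powr of_int k \<and> real p powr of_int k \<le> z / (x / 2)}"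
  shows "Ord_at (perf p s r y u z) x =
     (\<Sum>(k,i)\<in>F \<times> {0,1,2::nat}. if pt i = real p powr of_int k * x then coef i * pt i else 0)"
proof -
  have "Ord_at (perf p s r y u z) x = x * (\<Sum>j\<in>F \<times> {0,1,2::nat}.
      if (\<lambda>(k,i). pt i / real p powr of_int k) j = x then (\<lambda>(k,i). real p powr of_int k * coef i) j else 0)"
    unfolding F_def using assms by (intro RR_Ord[OF perf_RR]) auto
  also have "\<dots> = (\<Sum>j\<in>F \<times> {0,1,2::nat}. x *
      (if (\<lambda>(k,i). pt i / real p powr of_int k) j = x then (\<lambda>(k,i). real p powr of_int k * coef i) j else 0))"
    by (simp add: sum_distrib_left)
  also have "\<dots> = (\<Sum>(k,i)\<in>F \<times> {0,1,2::nat}. if pt i = real p powr of_int k * x then coef i * pt i else 0)"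
  proof (intro sum.cong refl)
    fix j assume "j \<in> F \<times> {0,1,2::nat}"
    obtain k i where j: "j = (k, i)" by (cases j)
    have pk: "real p powr of_int k > 0" using p1 by simp
    have iff: "pt i / real p powr of_int k = x \<longleftrightarrow> pt i = real p powr of_int k * x"
      using pk by (auto simp: field_simps)
    show "x * (if (\<lambda>(k,i). pt i / real p powr of_int k) j = x then (\<lambda>(k,i). real p powr of_int k * coef i) j else 0) =
        (case j of (k,i) \<Rightarrow> if pt i = real p powr of_int k * x then coef i * pt i else 0)"
      unfolding j using iff by (auto simp: mult_ac)
  qed
  finally show ?thesis .
qed

lemma perf_bounds:
  assumes pr: "prime p" and GC: "G \<in> Cp p" and uz_ne: "phi p u \<noteq> phi p z"
  shows "(G \<noteq> phi p u \<longrightarrow> pdiv p (perf p s r y u z) G \<ge> 0) \<and>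
         (G = phi p z \<longrightarrow> pdiv p (perf p s r y u z) G \<ge> r * z) \<and>
         (G = phi p u \<longrightarrow> pdiv p (perf p s r y u z) G \<ge> - ((s + r) * u))"
proof -
  have p0: "p > 0" using p1 by simp
  define x where "x = rep p G"
  have x0: "x > 0" and Gx: "G = phi p x" using rep_props[OF GC] unfolding x_def by auto
  define F where "F = {k::int. y / (2 * x) \<le> real p powr of_int k \<and> real p powr of_int k \<le> z / (x / 2)}"
  define g where "g = (\<lambda>(k,i). if pt i = real p powr of_int k * x then coef i * pt i else 0)"
  define J where "J = F \<times> {0,1,2::nat}"
  have finF: "finite F" unfolding F_def using fin_powr_int[OF p1, of "y / (2 * x)" "z / (x / 2)"] y0 x0 by simp
  have finJ: "finite J" unfolding J_def using finF by simp
  have pd: "pdiv p (perf p s r y u z) G = (\<Sum>j\<in>J. g j)"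
    unfolding pdiv_def using GC perf_Ord[OF x0] unfolding x_def[symmetric] F_def J_def g_def by simp
  have pt1: "pt 1 = u" "pt 2 = z" "coef 1 = - (s + r)" "coef 2 = r" unfolding pt_def coef_def by auto
  have gnn: "g (k, i) \<ge> 0" if "i \<noteq> 1" for k i
  proof -
    have "coef i \<ge> 0" unfolding coef_def using that s0 r0 by auto
    then show ?thesis unfolding g_def using pt_pos[of i] by auto
  qed
  have cls: "phi p (real p powr of_int k * x) = G" for k using phi_scale[OF p0] Gx by simp
  have A: "pdiv p (perf p s r y u z) G \<ge> 0" if "G \<noteq> phi p u"
  proof -
    have "g j \<ge> 0" if "j \<in> J" for j
    proof -
      obtain k i where j: "j = (k, i)" by (cases j)
      show ?thesis
      proof (cases "i = 1")
        case True
        have "u \<noteq> real p powr of_int k * x" using cls[of k] \<open>G \<noteq> phi p u\<close> by auto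
        then show ?thesis unfolding j g_def using True pt1 by auto
      qed (use gnn j in auto)
    qed
    then show ?thesis unfolding pd by (intro sum_nonneg) auto
  qed
  have B: "pdiv p (perf p s r y u z) G \<ge> r * z" if Gz: "G = phi p z"
  proof -
    have Gu: "G \<noteq> phi p u" using Gz uz_ne by simp
    obtain k0 :: int where k0: "z = real p powr of_int k0 * x"
      using phi_eq_unit[OF pr x0, of z] Gz Gx y0 yu uz by auto
    have pk: "real p powr of_int k0 = z / x" using k0 x0 by (simp add: field_simps)
    have "y / (2 * x) \<le> z / x" using x0 y0 yu uz by (simp add: field_simps)
    moreover have "z / x \<le> z / (x / 2)" using x0 y0 yu uz by (simp add: field_simps)
    ultimately have "k0 \<in> F" unfolding F_def using pk by simp
    then have k0J: "(k0, 2) \<in> J" unfolding J_def by simp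
    have nn: "g j \<ge> 0" if "j \<in> J" for j
    proof -
      obtain k i where j: "j = (k, i)" by (cases j)
      show ?thesis
      proof (cases "i = 1")
        case True
        have "u \<noteq> real p powr of_int k * x" using cls[of k] Gu by auto
        then show ?thesis unfolding j g_def using True pt1 by auto
      qed (use gnn j in auto)
    qed
    have "g (k0, 2) = r * z" unfolding g_def using pt1 k0 by simp
    moreover have "g (k0, 2) \<le> (\<Sum>j\<in>J. g j)"
      using finJ k0J nn by (intro member_le_sum) auto
    ultimately show ?thesis unfolding pd by simp
  qed
  have C: "pdiv p (perf p s r y u z) G \<ge> - ((s + r) * u)" if Gu': "G = phi p u"
  proof -
    obtain k1 :: int where k1: "u = real p powr of_int k1 * x"
      using phi_eq_unit[OF pr x0, of u] Gu' Gx y0 yu by auto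
    define h where "h = (\<lambda>j. if j = (k1, 1::nat) then - ((s + r) * u) else 0)"
    have "h j \<le> g j" if "j \<in> J" for j
    proof -
      obtain k i where j: "j = (k, i)" by (cases j)
      show ?thesis
      proof (cases "i = 1")
        case True
        show ?thesis
        proof (cases "k = k1")
          case True
          have c: "pt i = real p powr of_int k * x" using \<open>i = 1\<close> True pt1(1) k1 by simp
          have "g j = coef i * pt i" unfolding g_def j using c by simp
          also have "\<dots> = coef 1 * pt 1" using \<open>i = 1\<close> by simp
          also have "\<dots> = - ((s + r) * u)" unfolding pt1(1) pt1(3) by (simp add: algebra_simps)
          finally show ?thesis unfolding h_def j using True \<open>i = 1\<close> by simp
        next
          case False
          have "u \<noteq> real p powr of_int k * x"
          proof
            assume "u = real p powr of_int k * x"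
            then have "real p powr of_int k = real p powr of_int k1" using k1 x0 by simp
            then have "k = k1" using powr_int_inj[OF p1] by blast
            then show False using False by simp
          qed
          then show ?thesis unfolding h_def g_def j using \<open>i = 1\<close> False pt1 by simp
        qed
      next
        case False
        then show ?thesis unfolding h_def j using gnn[of i k] by simp
      qed
    qed
    then have "(\<Sum>j\<in>J. h j) \<le> (\<Sum>j\<in>J. g j)" by (intro sum_mono) auto
    moreover have "(\<Sum>j\<in>J. h j) \<ge> - ((s + r) * u)"
    proof -
      have "(\<Sum>j\<in>J. h j) = (if (k1, 1::nat) \<in> J then - ((s + r) * u) else 0)"
        unfolding h_def using finJ by (simp add: sum.delta')
      moreover have "(s + r) * u \<ge> 0" using s0 r0 y0 yu by simp
      ultimately show ?thesis by auto
    qed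
    ultimately show ?thesis unfolding pd by simp
  qed
  show ?thesis using A B C by blast
qed

end



lemma transfer:
  assumes pr: "prime p" and HC: "H \<in> Cp p" and H'C: "H' \<in> Cp p" and ne: "H \<noteq> H'"
    and a0: "a > 0" and th: "\<theta> > 1"
  shows "\<exists>f\<in>Kreal p. \<forall>G\<in>Cp p. pdiv p f G \<ge> (if G = H then a else if G = H' then - (\<theta> * a) else 0)"
proof -
  have p0: "p > 0" using pr prime_gt_0_nat by blast
  have p1: "real p > 1" using pr prime_gt_1_nat by simp
  define u where "u = rep p H'"
  have u0: "u > 0" and H'u: "H' = phi p u" using rep_props[OF H'C] unfolding u_def by auto
  define z0 where "z0 = rep p H"
  have z00: "z0 > 0" and Hz0: "H = phi p z0" using rep_props[OF HC] unfolding z0_def by auto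
  obtain m where m: "u / z0 < real p ^ m" using real_arch_pow[OF p1] by blast
  define z where "z = real p ^ m * z0"
  have uz: "u < z" using m z00 unfolding z_def by (simp add: field_simps)
  have Hz: "H = phi p z"
  proof -
    have "real p ^ m = real p powr of_int (int m)" using p0 by (simp add: powr_realpow)
    then show ?thesis unfolding z_def using phi_scale[OF p0, of "int m" z0] Hz0 by simp
  qed
  have z0': "z > 0" using uz u0 by simp
  have "a / z < \<theta> * a / z" using th a0 z0' by (simp add: divide_strict_right_mono)
  then obtain r where rH: "r \<in> Hp p" and r1: "a / z < r" and r2: "r < \<theta> * a / z"
    using Hp_dense[OF _ ] pr prime_gt_1_nat by blast
  have r0: "r > 0" using r1 a0 z0' by (smt (verit) divide_pos_pos)
  have rz: "r * z < \<theta> * a" using r2 z0' by (simp add: field_simps)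
  have raz: "a < r * z" using r1 z0' by (simp add: field_simps)
  have "r * (z - u) / u < (\<theta> * a - u * r) / u" using rz u0 by (simp add: divide_strict_right_mono algebra_simps)
  then obtain s where sH: "s \<in> Hp p" and s1: "r * (z - u) / u < s" and s2: "s < (\<theta> * a - u * r) / u"
    using Hp_dense pr prime_gt_1_nat by blast
  have rzu: "r * (z - u) > 0" using r0 uz by simp
  have s0: "s > 0" using s1 rzu u0 by (smt (verit) divide_pos_pos)
  have su1: "r * (z - u) < s * u" using s1 u0 by (simp add: field_simps)
  have su2: "s * u < \<theta> * a - u * r" using s2 u0 by (simp add: field_simps)
  define y where "y = u - r * (z - u) / s"
  have yu: "y < u" unfolding y_def using rzu s0 by simp
  have y0: "y > 0" unfolding y_def using su1 s0 by (simp add: field_simps)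
  have bal: "s * (u - y) = r * (z - u)" unfolding y_def using s0 by simp
  have fK: "perf p s r y u z \<in> Kreal p"
    using perf_Kreal[OF p1 y0 yu uz s0 r0 bal sH rH] .
  have ne': "phi p u \<noteq> phi p z" using ne H'u Hz by simp
  have "pdiv p (perf p s r y u z) G \<ge> (if G = H then a else if G = H' then - (\<theta> * a) else 0)"
    if GC: "G \<in> Cp p" for G
  proof -
    note bd = perf_bounds[OF p1 y0 yu uz s0 r0 bal sH rH pr GC ne']
    consider "G = H" | "G \<noteq> H" "G = H'" | "G \<noteq> H" "G \<noteq> H'" by blast
    then show ?thesis
    proof cases
      case 1 then show ?thesis using bd Hz raz by auto
    next
      case 2
      have "(s + r) * u < \<theta> * a" using su2 by (simp add: algebra_simps)
      then show ?thesis using bd H'u 2 by auto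
    next
      case 3 then show ?thesis using bd H'u by auto
    qed
  qed
  then show ?thesis using fK by blast
qed

lemma part2:
  assumes pr: "prime p" and dv: "is_divisor p D" and dpos: "deg D > 0"
  shows "H0 p D \<noteq> {\<lambda>_. -\<infinity>}"
proof -
  have p0: "p > 0" using pr prime_gt_0_nat by blast
  define AD where "AD = {H. D H \<noteq> 0}"
  have finAD: "finite AD" using dv unfolding is_divisor_def AD_def by auto
  have ADC: "AD \<subseteq> Cp p" using dv unfolding is_divisor_def AD_def by auto
  define N where "N = {H. D H < 0}"
  define P where "P = {H. D H > 0}"
  have NAD: "N \<subseteq> AD" "P \<subseteq> AD" unfolding N_def P_def AD_def by auto
  have finN: "finite N" and finP: "finite P" using NAD finAD finite_subset by auto
  have NP: "N \<inter> P = {}" unfolding N_def P_def by auto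
  have ADNP: "AD = P \<union> N" unfolding AD_def N_def P_def by auto
  define B where "B = (\<Sum>H\<in>P. D H)"
  define G where "G = (\<Sum>H\<in>N. - D H)"
  have degBG: "deg D = B - G"
  proof -
    have "deg D = (\<Sum>H\<in>P \<union> N. D H)" unfolding deg_def AD_def[symmetric] ADNP ..
    also have "\<dots> = B + (\<Sum>H\<in>N. D H)" unfolding B_def using finN finP NP
      by (subst sum.union_disjoint) auto
    also have "\<dots> = B - G" unfolding G_def by (simp add: sum_negf)
    finally show ?thesis .
  qed
  have G0: "G \<ge> 0" unfolding G_def N_def by (intro sum_nonneg) auto
  have BG: "B > G" using degBG dpos by simp
  have B0: "B > 0" using BG G0 by simp
  define Q where "Q = N \<times> P"
  have finQ: "finite Q" unfolding Q_def using finN finP by simp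
  define \<theta> where "\<theta> = B / G"
  define am where "am = (\<lambda>(H, H'). (- D H) * D H' / B)"
  define bnd where "bnd = (\<lambda>(H, H') K. if K = H then am (H, H') else if K = H' then - (\<theta> * am (H, H')) else 0)"
  have ex: "\<exists>f\<in>Kreal p. \<forall>K\<in>Cp p. pdiv p f K \<ge> bnd q K" if q: "q \<in> Q" for q
  proof -
    obtain H H' where qq: "q = (H, H')" by (cases q)
    have H: "H \<in> N" "H' \<in> P" using q qq unfolding Q_def by auto
    have "G > 0" unfolding G_def using finN H(1) unfolding N_def
      by (intro sum_pos2[of _ H]) auto
    then have th: "\<theta> > 1" unfolding \<theta>_def using BG by simp
    have a0: "am q > 0" unfolding am_def qq using H B0 unfolding N_def P_def
      by (simp add: mult_neg_pos divide_neg_pos)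
    have "H \<noteq> H'" using H NP by auto
    moreover have "H \<in> Cp p" "H' \<in> Cp p" using H NAD ADC by auto
    ultimately show ?thesis using transfer[OF pr _ _ _ a0 th] unfolding bnd_def qq by auto
  qed
  define tf where "tf = (\<lambda>q. SOME f. f \<in> Kreal p \<and> (\<forall>K\<in>Cp p. pdiv p f K \<ge> bnd q K))"
  have tf: "tf q \<in> Kreal p" "\<forall>K\<in>Cp p. pdiv p (tf q) K \<ge> bnd q K" if "q \<in> Q" for q
    using someI_ex[OF ex[OF that, unfolded Bex_def]] unfolding tf_def by auto
  define f where "f = (\<lambda>t. \<Sum>q\<in>Q. tf q t)"
  have fK: "f \<in> Kreal p" unfolding f_def using Kreal_sum[OF finQ _ p0] tf by auto
  have S1: "(\<Sum>q\<in>Q. if K = fst q then am q else 0) = (if K \<in> N then - D K else 0)" for K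
  proof -
    have "(\<Sum>q\<in>Q. if K = fst q then am q else 0) = (\<Sum>H\<in>N. \<Sum>H'\<in>P. if K = H then am (H, H') else 0)"
      unfolding Q_def sum.cartesian_product by (intro sum.cong refl) (auto split: prod.splits)
    also have "\<dots> = (\<Sum>H\<in>N. if K = H then - D H else 0)"
    proof (intro sum.cong refl)
      fix H
      have "(\<Sum>H'\<in>P. am (H, H')) = (- D H) / B * B" unfolding am_def B_def
        by (simp add: sum_distrib_left sum_divide_distrib)
      then show "(\<Sum>H'\<in>P. if K = H then am (H, H') else 0) = (if K = H then - D H else 0)"
        using B0 by auto
    qed
    also have "\<dots> = (if K \<in> N then - D K else 0)" using finN by (simp add: sum.delta)
    finally show ?thesis .
  qed
  have S2: "(\<Sum>q\<in>Q. if K = snd q then - (\<theta> * am q) else 0) \<ge> (if K \<in> P then - D K else 0)" for K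
  proof -
    have "(\<Sum>q\<in>Q. if K = snd q then - (\<theta> * am q) else 0) = (\<Sum>H\<in>N. \<Sum>H'\<in>P. if K = H' then - (\<theta> * am (H, H')) else 0)"
      unfolding Q_def sum.cartesian_product by (intro sum.cong refl) (auto split: prod.splits)
    also have "\<dots> = (\<Sum>H\<in>N. if K \<in> P then - (\<theta> * am (H, K)) else 0)"
      using finP by (simp add: sum.delta)
    also have "\<dots> = (if K \<in> P then - (\<theta> * (G * D K / B)) else 0)"
    proof (cases "K \<in> P")
      case True
      have "(\<Sum>H\<in>N. am (H, K)) = G * D K / B" unfolding am_def G_def
        by (simp add: sum_distrib_right sum_divide_distrib)
      then show ?thesis using True by (simp add: sum_negf sum_distrib_left[symmetric])
    qed simp
    also have "\<dots> \<ge> (if K \<in> P then - D K else 0)"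
    proof (cases "K \<in> P")
      case True
      have DK: "D K > 0" using True unfolding P_def by simp
      have "\<theta> * (G * D K / B) \<le> D K"
      proof (cases "G = 0")
        case True then show ?thesis using DK by simp
      next
        case False
        then have "\<theta> * (G * D K / B) = D K" unfolding \<theta>_def using B0 by (simp add: field_simps)
        then show ?thesis by simp
      qed
      then show ?thesis using True by simp
    qed simp
    finally show ?thesis .
  qed
  have main: "D K + pdiv p f K \<ge> 0" if KC: "K \<in> Cp p" for K
  proof -
    have "pdiv p f K = (\<Sum>q\<in>Q. pdiv p (tf q) K)"
      unfolding f_def using pdiv_sum[OF finQ _ p0 pr] tf by blast
    also have "\<dots> \<ge> (\<Sum>q\<in>Q. bnd q K)"
      using tf KC by (intro sum_mono) auto
    also have "(\<Sum>q\<in>Q. bnd q K) = (\<Sum>q\<in>Q. (if K = fst q then am q else 0) + (if K = snd q then - (\<theta> * am q) else 0))"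
    proof (intro sum.cong refl)
      fix q assume "q \<in> Q"
      then obtain H H' where qq: "q = (H, H')" "H \<in> N" "H' \<in> P" unfolding Q_def by auto
      then have "H \<noteq> H'" using NP by auto
      then show "bnd q K = (if K = fst q then am q else 0) + (if K = snd q then - (\<theta> * am q) else 0)"
        unfolding bnd_def qq by auto
    qed
    also have "\<dots> = (\<Sum>q\<in>Q. if K = fst q then am q else 0) + (\<Sum>q\<in>Q. if K = snd q then - (\<theta> * am q) else 0)"
      by (rule sum.distrib)
    finally have "pdiv p f K \<ge> (if K \<in> N then - D K else 0) + (if K \<in> P then - D K else 0)"
      using S1[of K] S2[of K] by linarith
    moreover have "D K + (if K \<in> N then - D K else 0) + (if K \<in> P then - D K else 0) = 0"
      unfolding N_def P_def by auto
    ultimately show ?thesis by linarith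
  qed
  have "(\<lambda>x. ereal (f x)) \<in> H0 p D" unfolding H0_def using fK main by blast
  moreover have "(\<lambda>x. ereal (f x)) \<noteq> (\<lambda>_. -\<infinity>)"
  proof
    assume "(\<lambda>x. ereal (f x)) = (\<lambda>_. -\<infinity>)"
    then have "ereal (f 0) = -\<infinity>" by metis
    then show False by simp
  qed
  ultimately show ?thesis by blast
qed

theorem lemma5p13:
  fixes p :: nat and D :: "real set \<Rightarrow> real"
  assumes "prime p" and "is_divisor p D"
  shows "(deg D < 0 \<longrightarrow> H0 p D = {\<lambda>_. -\<infinity>}) \<and>
         (deg D > 0 \<longrightarrow> H0 p D \<noteq> {\<lambda>_. -\<infinity>})"
  using part1[OF assms] part2[OF assms] by blast


end
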